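(* Let $k$ be a field of characteristic not $2$ or $3$, let $\mathcal{A}\in k^{n+1}\otimes(\bigoplus_{l=1}^r\operatorname{Sym}_2k^{d_l})$ be a block-diagonal tensor with $r$ blocks, and let $X\subseteq\mathbb{P}^n$ be the associated intersection of symmetroids, assumed to be a complete intersection. Let $x$ be a smooth (not necessarily closed) point of $X$. Then the image of $\mathbb{P}(\ker\mathcal{A}(x,\cdot,\cdot))\subseteq\mathbb{P}^m$ under $\psi$ is a linear space in $\widehat{\mathbb{P}}^n$ of dimension $r-1$, and this linear space is precisely the space of hyperplanes in $\mathbb{P}^n$ containing the tangent space $T_xX$.
   Context: $d_l\ge2$, $m+1=\sum d_l$; $\mathcal{A}$ is an $(n+1)$-tuple $(A_0,\dots,A_n)$ of symmetric block-diagonal $(m+1)\times(m+1)$ matrices with blocks $\mathcal{A}^{(l)}$ of sizes $d_l$; $\mathcal{A}(x,\cdot,\cdot)=\sum x_iA_i$. Standing conventions: no block identically zero, each $\det\mathcal{A}^{(l)}(\mathbf{x},\cdot,\cdot)$ reduced and irreducible. $X=\bigcap_lZ(\det\mathcal{A}^{(l)}(\mathbf{x},\cdot,\cdot))$. $\psi:\mathbb{P}^m\dashrightarrow\widehat{\mathbb{P}}^n$, $y\mapsto(y^TA_0y:\dots:y^TA_ny)$, points of $\widehat{\mathbb{P}}^n$ being identified with hyperplanes of $\mathbb{P}^n$. *)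

theory Defs
  imports "Jordan_Normal_Form.Determinant" "HOL-Library.Poly_Mapping"
    "HOL-Computational_Algebra.Polynomial" "HOL-Computational_Algebra.Factorial_Ring"
begin

text \<open>The tuple (A_0,...,A_n) is given as a function
  A :: nat => nat => nat => 'k, where A i a b is the (a,b) entry of A_i
  (indices 0..m, i.e. a,b < D where D = m+1 = sum of the block sizes). Block l occupies the index range
  [blk_start d l, blk_start d l + d l). Vectors in k^(n+1), K^(m+1) are
  functions nat => _ of which only the first n+1 resp. m+1 coordinates matter.\<close>

definition blk_start :: "(nat \<Rightarrow> nat) \<Rightarrow> nat \<Rightarrow> nat" where
  "blk_start d l = (\<Sum>j<l. d j)"

definition in_block :: "(nat \<Rightarrow> nat) \<Rightarrow> nat \<Rightarrow> nat \<Rightarrow> bool" where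
  "in_block d l a \<longleftrightarrow> blk_start d l \<le> a \<and> a < blk_start d l + d l"

definition sym_block_diag_tuple ::
  "nat \<Rightarrow> nat \<Rightarrow> (nat \<Rightarrow> nat) \<Rightarrow> (nat \<Rightarrow> nat \<Rightarrow> nat \<Rightarrow> 'k::zero) \<Rightarrow> bool" where
  "sym_block_diag_tuple n r d A \<longleftrightarrow>
     (\<forall>i\<le>n. \<forall>a<sum d {..<r}. \<forall>b<sum d {..<r}. A i a b = A i b a) \<and>
     (\<forall>i\<le>n. \<forall>a<sum d {..<r}. \<forall>b<sum d {..<r}.
        \<not> (\<exists>l<r. in_block d l a \<and> in_block d l b) \<longrightarrow> A i a b = 0)"

definition block_mat :: "(nat \<Rightarrow> nat) \<Rightarrow> nat \<Rightarrow> (nat \<Rightarrow> nat \<Rightarrow> 'a) \<Rightarrow> 'a mat" where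
  "block_mat d l M = mat (d l) (d l) (\<lambda>(a,b). M (blk_start d l + a) (blk_start d l + b))"

type_synonym 'k mpoly = "(nat \<Rightarrow>\<^sub>0 nat) \<Rightarrow>\<^sub>0 'k"

definition mp_var :: "nat \<Rightarrow> 'k::{zero,one} mpoly" where
  "mp_var i = Poly_Mapping.single (Poly_Mapping.single i 1) 1"

definition mp_const :: "'k::zero \<Rightarrow> 'k mpoly" where
  "mp_const c = Poly_Mapping.single 0 c"

definition pencil_poly :: "nat \<Rightarrow> (nat \<Rightarrow> nat \<Rightarrow> nat \<Rightarrow> 'k::comm_ring_1) \<Rightarrow> nat \<Rightarrow> nat \<Rightarrow> 'k mpoly" where
  "pencil_poly n A a b = (\<Sum>i\<le>n. mp_var i * mp_const (A i a b))"

definition block_det_poly :: "nat \<Rightarrow> (nat \<Rightarrow> nat) \<Rightarrow> (nat \<Rightarrow> nat \<Rightarrow> nat \<Rightarrow> 'k::comm_ring_1) \<Rightarrow> nat \<Rightarrow> 'k mpoly" where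
  "block_det_poly n d A l = det (block_mat d l (pencil_poly n A))"

definition reduced_elem :: "'a::comm_semiring_1 \<Rightarrow> bool" where
  "reduced_elem f \<longleftrightarrow> (\<forall>g. g * g dvd f \<longrightarrow> g dvd 1)"

definition gen_ideal :: "(nat \<Rightarrow> 'a::comm_ring_1) \<Rightarrow> nat \<Rightarrow> 'a set" where
  "gen_ideal F j = {(\<Sum>l<j. g l * F l) | g. True}"

text \<open>(F 0,...,F (r-1)) is a regular sequence: the standard algebraic meaning of
  "Z(F 0) \<inter> ... \<inter> Z(F (r-1)) is a complete intersection" for homogeneous forms.\<close>
definition regular_sequence :: "(nat \<Rightarrow> 'a::comm_ring_1) \<Rightarrow> nat \<Rightarrow> bool" where
  "regular_sequence F r \<longleftrightarrow> 1 \<notin> gen_ideal F r \<and>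
     (\<forall>j<r. \<forall>g. g * F j \<in> gen_ideal F j \<longrightarrow> g \<in> gen_ideal F j)"

definition field_emb :: "('k::field \<Rightarrow> 'K::field) \<Rightarrow> bool" where
  "field_emb \<phi> \<longleftrightarrow> \<phi> 1 = 1 \<and> (\<forall>a b. \<phi> (a + b) = \<phi> a + \<phi> b) \<and> (\<forall>a b. \<phi> (a * b) = \<phi> a * \<phi> b)"

definition alg_closed :: "'K::field itself \<Rightarrow> bool" where
  "alg_closed _ \<longleftrightarrow> (\<forall>p :: 'K poly. degree p > 0 \<longrightarrow> (\<exists>z. poly p z = 0))"

definition pencil_at :: "('k \<Rightarrow> 'K::comm_ring_1) \<Rightarrow> nat \<Rightarrow> (nat \<Rightarrow> nat \<Rightarrow> nat \<Rightarrow> 'k) \<Rightarrow> (nat \<Rightarrow> 'K) \<Rightarrow> nat \<Rightarrow> nat \<Rightarrow> 'K" where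
  "pencil_at \<phi> n A x a b = (\<Sum>i\<le>n. x i * \<phi> (A i a b))"

definition block_det_at :: "('k \<Rightarrow> 'K::comm_ring_1) \<Rightarrow> nat \<Rightarrow> (nat \<Rightarrow> nat) \<Rightarrow> (nat \<Rightarrow> nat \<Rightarrow> nat \<Rightarrow> 'k) \<Rightarrow> (nat \<Rightarrow> 'K) \<Rightarrow> nat \<Rightarrow> 'K" where
  "block_det_at \<phi> n d A x l = det (block_mat d l (pencil_at \<phi> n A x))"

text \<open>Partial derivative d/dx_j of det A^(l)(x,.,.) at x: the coefficient of t in
  det A^(l)(x + t e_j,.,.) in K[t].\<close>
definition block_det_deriv :: "('k \<Rightarrow> 'K::comm_ring_1) \<Rightarrow> nat \<Rightarrow> (nat \<Rightarrow> nat) \<Rightarrow> (nat \<Rightarrow> nat \<Rightarrow> nat \<Rightarrow> 'k) \<Rightarrow> (nat \<Rightarrow> 'K) \<Rightarrow> nat \<Rightarrow> nat \<Rightarrow> 'K" where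
  "block_det_deriv \<phi> n d A x l j =
     coeff (det (block_mat d l (\<lambda>a b. [: pencil_at \<phi> n A x a b, \<phi> (A j a b) :]))) 1"

definition on_X :: "('k \<Rightarrow> 'K::comm_ring_1) \<Rightarrow> nat \<Rightarrow> nat \<Rightarrow> (nat \<Rightarrow> nat) \<Rightarrow> (nat \<Rightarrow> nat \<Rightarrow> nat \<Rightarrow> 'k) \<Rightarrow> (nat \<Rightarrow> 'K) \<Rightarrow> bool" where
  "on_X \<phi> n r d A x \<longleftrightarrow> (\<exists>i\<le>n. x i \<noteq> 0) \<and> (\<forall>l<r. block_det_at \<phi> n d A x l = 0)"

text \<open>Smoothness of the complete intersection X at x (Jacobian criterion):
  the r gradients of the defining equations are linearly independent at x.\<close>
definition smooth_pt :: "('k \<Rightarrow> 'K::field) \<Rightarrow> nat \<Rightarrow> nat \<Rightarrow> (nat \<Rightarrow> nat) \<Rightarrow> (nat \<Rightarrow> nat \<Rightarrow> nat \<Rightarrow> 'k) \<Rightarrow> (nat \<Rightarrow> 'K) \<Rightarrow> bool" where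
  "smooth_pt \<phi> n r d A x \<longleftrightarrow> on_X \<phi> n r d A x \<and>
     (\<forall>c::nat \<Rightarrow> 'K. (\<forall>j\<le>n. (\<Sum>l<r. c l * block_det_deriv \<phi> n d A x l j) = 0) \<longrightarrow> (\<forall>l<r. c l = 0))"

text \<open>Affine cone over the embedded (projective) tangent space T_x X \<subseteq> P^n.\<close>
definition tangent_cone :: "('k \<Rightarrow> 'K::comm_ring_1) \<Rightarrow> nat \<Rightarrow> nat \<Rightarrow> (nat \<Rightarrow> nat) \<Rightarrow> (nat \<Rightarrow> nat \<Rightarrow> nat \<Rightarrow> 'k) \<Rightarrow> (nat \<Rightarrow> 'K) \<Rightarrow> (nat \<Rightarrow> 'K) set" where
  "tangent_cone \<phi> n r d A x = {z. \<forall>l<r. (\<Sum>j\<le>n. block_det_deriv \<phi> n d A x l j * z j) = 0}"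

definition in_kernel :: "('k \<Rightarrow> 'K::comm_ring_1) \<Rightarrow> nat \<Rightarrow> nat \<Rightarrow> (nat \<Rightarrow> nat) \<Rightarrow> (nat \<Rightarrow> nat \<Rightarrow> nat \<Rightarrow> 'k) \<Rightarrow> (nat \<Rightarrow> 'K) \<Rightarrow> (nat \<Rightarrow> 'K) \<Rightarrow> bool" where
  "in_kernel \<phi> n r d A x y \<longleftrightarrow>
     (\<forall>a<sum d {..<r}. (\<Sum>b<sum d {..<r}. pencil_at \<phi> n A x a b * y b) = 0)"

definition psi :: "('k \<Rightarrow> 'K::comm_ring_1) \<Rightarrow> nat \<Rightarrow> (nat \<Rightarrow> nat) \<Rightarrow> (nat \<Rightarrow> nat \<Rightarrow> nat \<Rightarrow> 'k) \<Rightarrow> (nat \<Rightarrow> 'K) \<Rightarrow> nat \<Rightarrow> 'K" where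
  "psi \<phi> r d A y i = (\<Sum>a<sum d {..<r}. \<Sum>b<sum d {..<r}. y a * \<phi> (A i a b) * y b)"

text \<open>The point [h] of dual P^n (h \<noteq> 0) lies in psi(P(ker A(x,.,.))):
  h is proportional to psi(y) for some y in the kernel (psi defined at [y]).\<close>
definition in_psi_image :: "('k \<Rightarrow> 'K::field) \<Rightarrow> nat \<Rightarrow> nat \<Rightarrow> (nat \<Rightarrow> nat) \<Rightarrow> (nat \<Rightarrow> nat \<Rightarrow> nat \<Rightarrow> 'k) \<Rightarrow> (nat \<Rightarrow> 'K) \<Rightarrow> (nat \<Rightarrow> 'K) \<Rightarrow> bool" where
  "in_psi_image \<phi> n r d A x h \<longleftrightarrow> (\<exists>y c. in_kernel \<phi> n r d A x y \<and> c \<noteq> 0 \<and>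
      (\<forall>i\<le>n. psi \<phi> r d A y i = c * h i))"

end

theory Submission
  imports Defs
begin

lemma coeff_sign_mult: "coeff ((of_int (sign p) :: 'a::comm_ring_1 poly) * q) k = of_int (sign p) * coeff q k"
  by (simp add: sign_def of_int_poly)

lemma coeff_prod_lin:
  fixes a b :: "nat \<Rightarrow> 'a::comm_ring_1"
  assumes "finite S"
  shows "coeff (\<Prod>i\<in>S. [:a i, b i:]) 0 = (\<Prod>i\<in>S. a i) \<and>
         coeff (\<Prod>i\<in>S. [:a i, b i:]) 1 = (\<Sum>i\<in>S. b i * (\<Prod>k\<in>S-{i}. a k))"
  using assms
proof (induction S rule: finite_induct)
  case empty
  then show ?case by simp
next
  case (insert x F)
  have e: "(\<Sum>i\<in>F. b i * (\<Prod>k\<in>insert x F-{i}. a k)) = (\<Sum>i\<in>F. a x * (b i * (\<Prod>k\<in>F-{i}. a k)))"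
  proof (rule sum.cong)
    fix i assume "i \<in> F"
    then have "insert x F - {i} = insert x (F - {i})" "x \<notin> F - {i}" using insert by auto
    then show "b i * (\<Prod>k\<in>insert x F-{i}. a k) = a x * (b i * (\<Prod>k\<in>F-{i}. a k))"
      using insert by (simp add: algebra_simps)
  qed simp
  have "insert x F - {x} = F" using insert by auto
  then show ?case using insert e
    by (simp add: mult_pCons_left sum_distrib_left algebra_simps)
qed

lemma coeff_prod_lin1:
  fixes a b :: "nat \<Rightarrow> 'a::comm_ring_1"
  assumes "finite S"
  shows "coeff (\<Prod>i\<in>S. [:a i, b i:]) (Suc 0) = (\<Sum>i\<in>S. b i * (\<Prod>k\<in>S-{i}. a k))"
  using coeff_prod_lin[OF assms, of a b] by simp

lemma cofactor_cong_row:
  assumes "A \<in> carrier_mat k k" "B \<in> carrier_mat k k"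
    and "\<And>a b. a < k \<Longrightarrow> b < k \<Longrightarrow> a \<noteq> i \<Longrightarrow> A $$ (a,b) = B $$ (a,b)"
  shows "cofactor A i j = cofactor B i j"
proof -
  have "mat_delete A i j = mat_delete B i j"
    unfolding mat_delete_def using assms by (intro cong_mat) auto
  then show ?thesis unfolding cofactor_def by simp
qed

lemma det_rowrep:
  fixes m nn :: "nat \<Rightarrow> nat \<Rightarrow> 'a::comm_ring_1"
  assumes i: "i < k"
  shows "det (mat k k (\<lambda>(a,b). if a = i then nn i b else m a b)) =
    (\<Sum>j<k. nn i j * cofactor (mat k k (\<lambda>(a,b). m a b)) i j)"
proof -
  let ?R = "mat k k (\<lambda>(a,b). if a = i then nn i b else m a b)"
  have "det ?R = (\<Sum>j<k. ?R $$ (i,j) * cofactor ?R i j)"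
    by (rule laplace_expansion_row[OF _ i]) simp
  also have "\<dots> = (\<Sum>j<k. nn i j * cofactor (mat k k (\<lambda>(a,b). m a b)) i j)"
  proof (rule sum.cong)
    fix j assume "j \<in> {..<k}"
    moreover have "cofactor ?R i j = cofactor (mat k k (\<lambda>(a,b). m a b)) i j"
      by (rule cofactor_cong_row) auto
    ultimately show "?R $$ (i,j) * cofactor ?R i j = nn i j * cofactor (mat k k (\<lambda>(a,b). m a b)) i j"
      using i by simp
  qed simp
  finally show ?thesis .
qed

lemma jacobi:
  fixes m nn :: "nat \<Rightarrow> nat \<Rightarrow> 'a::comm_ring_1"
  shows "coeff (det (mat k k (\<lambda>(a,b). [:m a b, nn a b:]))) 1 =
    (\<Sum>i<k. \<Sum>j<k. nn i j * cofactor (mat k k (\<lambda>(a,b). m a b)) i j)"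
proof -
  let ?P = "{p. p permutes {0..<k}}"
  have fP: "finite ?P" by (simp add: finite_permutations)
  have "det (mat k k (\<lambda>(a,b). [:m a b, nn a b:])) =
     (\<Sum>p\<in>?P. of_int (sign p) * (\<Prod>i=0..<k. [:m i (p i), nn i (p i):]))"
  proof -
    have "det (mat k k (\<lambda>(a,b). [:m a b, nn a b:])) =
     (\<Sum>p\<in>?P. of_int (sign p) * (\<Prod>i=0..<k. (mat k k (\<lambda>(a,b). [:m a b, nn a b:])) $$ (i, p i)))"
      by (rule det_def') simp
    also have "\<dots> = (\<Sum>p\<in>?P. of_int (sign p) * (\<Prod>i=0..<k. [:m i (p i), nn i (p i):]))"
    proof (rule sum.cong[OF refl])
      fix p assume "p \<in> ?P"
      then have "\<And>i. i < k \<Longrightarrow> p i < k" using permutes_in_image by fastforce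
      then show "of_int (sign p) * (\<Prod>i=0..<k. (mat k k (\<lambda>(a,b). [:m a b, nn a b:])) $$ (i, p i)) =
         of_int (sign p) * (\<Prod>i=0..<k. [:m i (p i), nn i (p i):])"
        by (intro arg_cong[where f="\<lambda>x. _ * x"] prod.cong) auto
    qed
    finally show ?thesis .
  qed
  then have "coeff (det (mat k k (\<lambda>(a,b). [:m a b, nn a b:]))) 1 =
     (\<Sum>p\<in>?P. of_int (sign p) * (\<Sum>i\<in>{0..<k}. nn i (p i) * (\<Prod>j\<in>{0..<k}-{i}. m j (p j))))"
    by (simp add: coeff_sum coeff_sign_mult coeff_prod_lin1)
  also have "\<dots> = (\<Sum>i\<in>{0..<k}. \<Sum>p\<in>?P. of_int (sign p) * (nn i (p i) * (\<Prod>j\<in>{0..<k}-{i}. m j (p j))))"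
    by (simp add: sum_distrib_left sum.swap[of _ ?P])
  also have "\<dots> = (\<Sum>i\<in>{0..<k}. det (mat k k (\<lambda>(a,b). if a = i then nn i b else m a b)))"
  proof (rule sum.cong[OF refl])
    fix i assume i: "i \<in> {0..<k}"
    have "det (mat k k (\<lambda>(a,b). if a = i then nn i b else m a b)) =
      (\<Sum>p\<in>?P. of_int (sign p) * (\<Prod>j=0..<k. (mat k k (\<lambda>(a,b). if a = i then nn i b else m a b)) $$ (j, p j)))"
      by (rule det_def') simp
    also have "\<dots> = (\<Sum>p\<in>?P. of_int (sign p) * (nn i (p i) * (\<Prod>j\<in>{0..<k}-{i}. m j (p j))))"
    proof (rule sum.cong[OF refl])
      fix p assume "p \<in> ?P"
      then have pk: "\<And>i. i < k \<Longrightarrow> p i < k" using permutes_in_image by fastforce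
      have "(\<Prod>j=0..<k. (mat k k (\<lambda>(a,b). if a = i then nn i b else m a b)) $$ (j, p j))
         = (\<Prod>j=0..<k. (if j = i then nn i (p j) else m j (p j)))"
        using pk by (intro prod.cong) auto
      also have "\<dots> = nn i (p i) * (\<Prod>j\<in>{0..<k}-{i}. m j (p j))"
      proof -
          have "(\<Prod>j\<in>{0..<k}-{i}. (if j = i then nn i (p j) else m j (p j))) = (\<Prod>j\<in>{0..<k}-{i}. m j (p j))"
            by (rule prod.cong) auto
          then show ?thesis using i by (simp add: prod.remove[of "{0..<k}" i])
        qed
      finally show "of_int (sign p) * (\<Prod>j=0..<k. (mat k k (\<lambda>(a,b). if a = i then nn i b else m a b)) $$ (j, p j))
        = of_int (sign p) * (nn i (p i) * (\<Prod>j\<in>{0..<k}-{i}. m j (p j)))" by simp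
    qed
    finally show "(\<Sum>p\<in>?P. of_int (sign p) * (nn i (p i) * (\<Prod>j\<in>{0..<k}-{i}. m j (p j)))) =
       det (mat k k (\<lambda>(a,b). if a = i then nn i b else m a b))" by simp
  qed
  also have "\<dots> = (\<Sum>i<k. \<Sum>j<k. nn i j * cofactor (mat k k (\<lambda>(a,b). m a b)) i j)"
    by (simp add: atLeast0LessThan det_rowrep)
  finally show ?thesis .
qed

lemma cof_vanish:
  fixes M :: "'a::field mat"
  assumes M: "M \<in> carrier_mat k k" and a: "a < k" and b: "b < k"
    and ker: "\<forall>i<k. (\<Sum>j<k. M $$ (i,j) * w j) = 0" and wb: "w b = 0" and nz: "\<exists>j<k. w j \<noteq> 0"
  shows "cofactor M a b = 0"
proof -
  define R where "R = mat k k (\<lambda>(i,j). if i = a then (if j = b then 1 else 0) else M $$ (i,j))"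
  have R: "R \<in> carrier_mat k k" unfolding R_def by simp
  have "det R = (\<Sum>j<k. R $$ (a,j) * cofactor R a j)"
    by (rule laplace_expansion_row[OF R a])
  also have "\<dots> = (\<Sum>j<k. (if j = b then cofactor R a j else 0))"
    unfolding R_def using a by (intro sum.cong) auto
  also have "\<dots> = cofactor R a b" using b by simp
  also have "\<dots> = cofactor M a b"
    by (rule cofactor_cong_row[OF R M]) (auto simp: R_def)
  finally have dR: "det R = cofactor M a b" .
  have "det R = 0"
  proof -
    have "vec k w \<in> carrier_vec k" by simp
    moreover have "vec k w \<noteq> 0\<^sub>v k"
    proof
      assume "vec k w = 0\<^sub>v k"
      then have "\<And>j. j < k \<Longrightarrow> w j = 0" by (metis index_vec index_zero_vec(1))
      then show False using nz by auto
    qed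
    moreover have "R *\<^sub>v vec k w = 0\<^sub>v k"
    proof (rule eq_vecI)
      fix i assume i: "i < dim_vec (0\<^sub>v k :: 'a vec)"
      then have i: "i < k" by simp
      have "(R *\<^sub>v vec k w) $ i = (\<Sum>j\<in>{0..<k}. R $$ (i,j) * w j)"
        using i R by (simp add: mult_mat_vec_def scalar_prod_def)
      also have "\<dots> = 0"
      proof (cases "i = a")
        case True
        then have "(\<Sum>j\<in>{0..<k}. R $$ (i,j) * w j) = (\<Sum>j\<in>{0..<k}. if j = b then w j else 0)"
          unfolding R_def using i by (intro sum.cong) auto
        then show ?thesis using b wb by simp
      next
        case False
        then have "(\<Sum>j\<in>{0..<k}. R $$ (i,j) * w j) = (\<Sum>j<k. M $$ (i,j) * w j)"
          unfolding R_def using i by (simp add: atLeast0LessThan)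
        then show ?thesis using ker i by simp
      qed
      finally show "(R *\<^sub>v vec k w) $ i = 0\<^sub>v k $ i" using i by simp
    qed (simp add: R_def)
    ultimately show ?thesis using det_0_iff_vec_prod_zero_field[OF R] by blast
  qed
  then show ?thesis using dR by simp
qed

lemma adj_ker:
  fixes M :: "'a::field mat"
  assumes M: "M \<in> carrier_mat k k" and d: "det M = 0" and a: "a < k" and c: "c < k"
  shows "(\<Sum>b<k. M $$ (a,b) * cofactor M c b) = 0"
proof -
  have "(M * adj_mat M) $$ (a,c) = (det M \<cdot>\<^sub>m 1\<^sub>m k) $$ (a,c)" using adj_mat(2)[OF M] by simp
  also have "\<dots> = 0" using d a c by simp
  finally have "(M * adj_mat M) $$ (a,c) = 0" .
  moreover have "(M * adj_mat M) $$ (a,c) = (\<Sum>b<k. M $$ (a,b) * cofactor M c b)"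
    using M a c unfolding times_mat_def scalar_prod_def adj_mat_def
    by (auto simp: atLeast0LessThan intro!: sum.cong)
  ultimately show ?thesis by simp
qed

lemma cof_sym:
  fixes M :: "'a::comm_ring_1 mat"
  assumes M: "M \<in> carrier_mat k k" and sym: "\<And>i j. i < k \<Longrightarrow> j < k \<Longrightarrow> M $$ (i,j) = M $$ (j,i)"
  shows "cofactor M a b = cofactor M b a"
proof -
  have "mat_delete M b a = transpose_mat (mat_delete M a b)"
    unfolding mat_delete_def using M sym by (intro eq_matI) auto
  moreover have "mat_delete M a b \<in> carrier_mat (k-1) (k-1)" using mat_delete_carrier[OF M] .
  ultimately have "det (mat_delete M b a) = det (mat_delete M a b)" using det_transpose by metis
  then show ?thesis unfolding cofactor_def by (simp add: add.commute)
qed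

lemma block_struct:
  fixes M :: "'a::field mat"
  assumes M: "M \<in> carrier_mat k k" and sym: "\<And>i j. i < k \<Longrightarrow> j < k \<Longrightarrow> M $$ (i,j) = M $$ (j,i)"
    and d: "det M = 0" and nz: "\<exists>a<k. \<exists>b<k. cofactor M a b \<noteq> 0"
  shows "\<exists>z lam. lam \<noteq> 0 \<and> (\<forall>a<k. \<forall>b<k. cofactor M a b = lam * z a * z b) \<and>
     (\<forall>a<k. (\<Sum>b<k. M $$ (a,b) * z b) = 0) \<and>
     (\<forall>v. (\<forall>a<k. (\<Sum>b<k. M $$ (a,b) * v b) = 0) \<longrightarrow> (\<exists>\<mu>. \<forall>b<k. v b = \<mu> * z b))"
proof -
  obtain a0 b0 where a0: "a0 < k" and b0: "b0 < k" and c0: "cofactor M a0 b0 \<noteq> 0" using nz by blast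
  define z where "z b = cofactor M a0 b" for b
  have zker: "\<forall>a<k. (\<Sum>b<k. M $$ (a,b) * z b) = 0" unfolding z_def using adj_ker[OF M d _ a0] by blast
  have zb0: "z b0 \<noteq> 0" using c0 unfolding z_def .
  have kerprop: "\<exists>\<mu>. \<forall>b<k. v b = \<mu> * z b" if vk: "\<forall>a<k. (\<Sum>b<k. M $$ (a,b) * v b) = 0" for v
  proof -
    define \<mu> where "\<mu> = v b0 / z b0"
    define w where "w b = v b - \<mu> * z b" for b
    have wk: "\<forall>a<k. (\<Sum>b<k. M $$ (a,b) * w b) = 0"
    proof (intro allI impI)
      fix a assume a: "a < k"
      have "(\<Sum>b<k. M $$ (a,b) * w b) = (\<Sum>b<k. M $$ (a,b) * v b) - \<mu> * (\<Sum>b<k. M $$ (a,b) * z b)"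
        unfolding w_def by (simp add: algebra_simps sum_subtractf sum_distrib_left)
      then show "(\<Sum>b<k. M $$ (a,b) * w b) = 0" using vk zker a by simp
    qed
    have wb0: "w b0 = 0" unfolding w_def \<mu>_def using zb0 by simp
    have "\<forall>j<k. w j = 0"
    proof (rule ccontr)
      assume "\<not> (\<forall>j<k. w j = 0)"
      then have "\<exists>j<k. w j \<noteq> 0" by blast
      from cof_vanish[OF M a0 b0 wk wb0 this] c0 show False by simp
    qed
    then show ?thesis unfolding w_def by (metis eq_iff_diff_eq_0)
  qed
  have "\<forall>a\<in>{..<k}. \<exists>\<mu>. \<forall>b<k. cofactor M a b = \<mu> * z b"
  proof
    fix a assume "a \<in> {..<k}"
    then show "\<exists>\<mu>. \<forall>b<k. cofactor M a b = \<mu> * z b"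
      using kerprop[of "\<lambda>b. cofactor M a b"] adj_ker[OF M d] by auto
  qed
  then obtain mu where mu: "\<forall>a<k. \<forall>b<k. cofactor M a b = mu a * z b" by (metis lessThan_iff)
  define lam where "lam = mu b0 / z b0"
  have mua: "mu a = lam * z a" if a: "a < k" for a
  proof -
    have "mu a * z b0 = cofactor M a b0" using mu a b0 by simp
    also have "\<dots> = cofactor M b0 a" by (rule cof_sym[OF M sym])
    also have "\<dots> = mu b0 * z a" using mu a b0 by simp
    finally show ?thesis unfolding lam_def using zb0 by (simp add: field_simps)
  qed
  have cof: "\<forall>a<k. \<forall>b<k. cofactor M a b = lam * z a * z b" using mu mua by simp
  have "lam \<noteq> 0" using cof a0 b0 c0 by force
  then show ?thesis using cof zker kerprop by blast
qed

lemma blk_start_Suc: "blk_start d (Suc l) = blk_start d l + d l"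
  by (simp add: blk_start_def)

lemma blk_mono: "l < l' \<Longrightarrow> blk_start d l + d l \<le> blk_start d l'"
proof (induction l')
  case 0 then show ?case by simp
next
  case (Suc l')
  then show ?case by (cases "l = l'") (auto simp: blk_start_Suc)
qed

lemma in_block_unique: "in_block d l a \<Longrightarrow> in_block d l' a \<Longrightarrow> l = l'"
  unfolding in_block_def
  by (metis blk_mono le_trans linorder_neqE_nat not_le)

lemma block_in_range: "l < r \<Longrightarrow> a < d l \<Longrightarrow> blk_start d l + a < sum d {..<r}"
proof -
  assume "l < r" "a < d l"
  then have "blk_start d l + d l \<le> blk_start d r" using blk_mono[of l r d] by simp
  then show ?thesis using \<open>a < d l\<close> by (simp add: blk_start_def)
qed

lemma in_block_add: "a < d l \<Longrightarrow> in_block d l (blk_start d l + a)"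
  by (simp add: in_block_def)

lemma sum_add_split: "(\<Sum>a<(S::nat)+e. f a) = (\<Sum>a<S. f a) + (\<Sum>a<e. (f (S+a) :: 'a::comm_monoid_add))"
  by (induction e) (simp_all add: add.assoc)

lemma sum_blocks: "(\<Sum>a<sum d {..<r}. f a) = (\<Sum>l<r. \<Sum>a<d l. (f (blk_start d l + a) :: 'a::comm_monoid_add))"
proof (induction r)
  case 0 then show ?case by simp
next
  case (Suc r)
  have "sum d {..<Suc r} = sum d {..<r} + d r" by simp
  then show ?case using Suc by (simp add: sum_add_split blk_start_def)
qed

lemma block_exists: "a < sum d {..<r} \<Longrightarrow> \<exists>l<r. in_block d l a"
proof (induction r)
  case 0 then show ?case by simp
next
  case (Suc r)
  show ?case
  proof (cases "a < sum d {..<r}")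
    case True then show ?thesis using Suc by (meson less_SucI)
  next
    case False
    then have "in_block d r a" using Suc.prems by (simp add: in_block_def blk_start_def)
    then show ?thesis by blast
  qed
qed

lemma block_row_sum:
  fixes F :: "nat \<Rightarrow> nat \<Rightarrow> 'a::comm_ring_1"
  assumes Fz: "\<forall>a<sum d {..<r}. \<forall>b<sum d {..<r}. \<not> (\<exists>l<r. in_block d l a \<and> in_block d l b) \<longrightarrow> F a b = 0"
    and l: "l < r" and a: "a < d l"
  shows "(\<Sum>b<sum d {..<r}. F (blk_start d l + a) b * y b) =
    (\<Sum>b<d l. F (blk_start d l + a) (blk_start d l + b) * y (blk_start d l + b))"
proof -
  let ?G = "\<lambda>l'. (\<Sum>b<d l'. F (blk_start d l + a) (blk_start d l' + b) * y (blk_start d l' + b))"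
  have "(\<Sum>b<sum d {..<r}. F (blk_start d l + a) b * y b) = (\<Sum>l'<r. ?G l')"
    by (rule sum_blocks)
  also have "\<dots> = (\<Sum>l'<r. if l' = l then ?G l else 0)"
  proof (rule sum.cong[OF refl])
    fix l' assume l': "l' \<in> {..<r}"
    show "?G l' = (if l' = l then ?G l else 0)"
    proof (cases "l' = l")
      case False
      have "F (blk_start d l + a) (blk_start d l' + b) = 0" if b: "b < d l'" for b
      proof (rule Fz[rule_format])
        show "blk_start d l + a < sum d {..<r}" using l a by (rule block_in_range)
        show "blk_start d l' + b < sum d {..<r}" using l' b block_in_range by blast
        show "\<not> (\<exists>l''<r. in_block d l'' (blk_start d l + a) \<and> in_block d l'' (blk_start d l' + b))"
          using in_block_unique in_block_add[of a d l] in_block_add[of b d l'] a b False by metis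
      qed
      then show ?thesis using False by simp
    qed simp
  qed
  also have "\<dots> = ?G l" using l by simp
  finally show ?thesis .
qed

lemma block_quad_sum:
  fixes F :: "nat \<Rightarrow> nat \<Rightarrow> 'a::comm_ring_1"
  assumes Fz: "\<forall>a<sum d {..<r}. \<forall>b<sum d {..<r}. \<not> (\<exists>l<r. in_block d l a \<and> in_block d l b) \<longrightarrow> F a b = 0"
  shows "(\<Sum>a<sum d {..<r}. \<Sum>b<sum d {..<r}. y a * F a b * y b) =
    (\<Sum>l<r. \<Sum>a<d l. \<Sum>b<d l. y (blk_start d l + a) * F (blk_start d l + a) (blk_start d l + b) * y (blk_start d l + b))"
proof -
  have "(\<Sum>a<sum d {..<r}. \<Sum>b<sum d {..<r}. y a * F a b * y b) =
     (\<Sum>a<sum d {..<r}. y a * (\<Sum>b<sum d {..<r}. F a b * y b))"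
    by (simp add: sum_distrib_left mult.assoc)
  also have "\<dots> = (\<Sum>l<r. \<Sum>a<d l. y (blk_start d l + a) * (\<Sum>b<sum d {..<r}. F (blk_start d l + a) b * y b))"
    by (rule sum_blocks)
  also have "\<dots> = (\<Sum>l<r. \<Sum>a<d l. y (blk_start d l + a) *
      (\<Sum>b<d l. F (blk_start d l + a) (blk_start d l + b) * y (blk_start d l + b)))"
    using block_row_sum[OF Fz] by (intro sum.cong refl) auto
  also have "\<dots> = (\<Sum>l<r. \<Sum>a<d l. \<Sum>b<d l. y (blk_start d l + a) * F (blk_start d l + a) (blk_start d l + b) * y (blk_start d l + b))"
    by (simp add: sum_distrib_left mult.assoc)
  finally show ?thesis .
qed

lemma dual_span:
  fixes g :: "nat \<Rightarrow> nat \<Rightarrow> 'a::field"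
  shows "(\<forall>z. (\<forall>l<m. (\<Sum>j\<le>n. g l j * z j) = 0) \<longrightarrow> (\<Sum>i\<le>n. h i * z i) = 0) \<Longrightarrow>
    \<exists>c. \<forall>i\<le>n. h i = (\<Sum>l<m. c l * g l i)"
proof (induction m arbitrary: h)
  case 0
  have "h i = 0" if i: "i \<le> n" for i
  proof -
    have "(\<Sum>j\<le>n. h j * (if j = i then 1 else 0)) = 0" using 0 by auto
    then show ?thesis using i by (simp add: if_distrib cong: if_cong)
  qed
  then show ?case by simp
next
  case (Suc m)
  let ?p = "\<lambda>f z. (\<Sum>j\<le>n. f j * z j)"
  show ?case
  proof (cases "\<forall>z. (\<forall>l<m. ?p (g l) z = 0) \<longrightarrow> ?p (g m) z = 0")
    case True
    have "\<forall>z. (\<forall>l<m. ?p (g l) z = 0) \<longrightarrow> ?p h z = 0"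
      using Suc.prems True by (metis less_Suc_eq)
    then obtain c where c: "\<forall>i\<le>n. h i = (\<Sum>l<m. c l * g l i)" using Suc.IH by blast
    then have "\<forall>i\<le>n. h i = (\<Sum>l<Suc m. (c(m := 0)) l * g l i)" by simp
    then show ?thesis by blast
  next
    case False
    then obtain z1 where z1: "\<forall>l<m. ?p (g l) z1 = 0" and z1m: "?p (g m) z1 \<noteq> 0" by blast
    define \<alpha> where "\<alpha> = ?p h z1 / ?p (g m) z1"
    define h' where "h' j = h j - \<alpha> * g m j" for j
    have "\<forall>z. (\<forall>l<m. ?p (g l) z = 0) \<longrightarrow> ?p h' z = 0"
    proof (intro allI impI)
      fix z assume z: "\<forall>l<m. ?p (g l) z = 0"
      define t where "t = ?p (g m) z / ?p (g m) z1"
      define z' where "z' j = z j - t * z1 j" for j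
      have lin: "?p f z' = ?p f z - t * ?p f z1" for f
        unfolding z'_def by (simp add: algebra_simps sum_subtractf sum_distrib_left)
      have "\<forall>l<Suc m. ?p (g l) z' = 0"
      proof (intro allI impI)
        fix l assume "l < Suc m"
        then consider "l < m" | "l = m" by linarith
        then show "?p (g l) z' = 0"
        proof cases
          case 1 then show ?thesis using lin z z1 by simp
        next
          case 2 then show ?thesis using lin z1m unfolding t_def by simp
        qed
      qed
      then have "?p h z' = 0" using Suc.prems by blast
      then have "?p h z = t * ?p h z1" using lin by simp
      moreover have "?p h' z = ?p h z - \<alpha> * ?p (g m) z"
        unfolding h'_def by (simp add: algebra_simps sum_subtractf sum_distrib_left)
      ultimately show "?p h' z = 0" unfolding t_def \<alpha>_def using z1m by (simp add: field_simps)
    qed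
    then obtain c where c: "\<forall>i\<le>n. h' i = (\<Sum>l<m. c l * g l i)" using Suc.IH by blast
    have "\<forall>i\<le>n. h i = (\<Sum>l<Suc m. (c(m := \<alpha>)) l * g l i)"
      using c unfolding h'_def by (simp add: algebra_simps)
    then show ?thesis by blast
  qed
qed

theorem proposition4p1p1:
  fixes n r :: nat and d :: "nat \<Rightarrow> nat"
    and A :: "nat \<Rightarrow> nat \<Rightarrow> nat \<Rightarrow> 'k::field"
    and \<phi> :: "'k \<Rightarrow> 'K::field" and x :: "nat \<Rightarrow> 'K"
  assumes char2: "(2::'k) \<noteq> 0" and char3: "(3::'k) \<noteq> 0"
    and blocks: "\<forall>l<r. d l \<ge> 2"
    and symbd: "sym_block_diag_tuple n r d A"
    and nonzero_blocks: "\<forall>l<r. \<exists>i\<le>n. \<exists>a<d l. \<exists>b<d l.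
                           A i (blk_start d l + a) (blk_start d l + b) \<noteq> 0"
    and red: "\<forall>l<r. reduced_elem (block_det_poly n d A l)"
    and irr: "\<forall>l<r. irreducible (block_det_poly n d A l)"
    and ci: "regular_sequence (block_det_poly n d A) r"
    and hom: "field_emb \<phi>" and algcl: "alg_closed TYPE('K)"
    and smooth: "smooth_pt \<phi> n r d A x"
  shows "(\<forall>h. (\<exists>i\<le>n. h i \<noteq> 0) \<longrightarrow>
            (in_psi_image \<phi> n r d A x h \<longleftrightarrow>
             (\<forall>z\<in>tangent_cone \<phi> n r d A x. (\<Sum>i\<le>n. h i * z i) = 0)))
       \<and> (\<exists>w :: nat \<Rightarrow> nat \<Rightarrow> 'K.
            (\<forall>c. (\<forall>i\<le>n. (\<Sum>l<r. c l * w l i) = 0) \<longrightarrow> (\<forall>l<r. c l = 0)) \<and>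
            (\<forall>h. (in_psi_image \<phi> n r d A x h \<or> (\<forall>i\<le>n. h i = 0)) \<longleftrightarrow>
                 (\<exists>c. \<forall>i\<le>n. h i = (\<Sum>l<r. c l * w l i))))"
proof -
  define g where "g = block_det_deriv \<phi> n d A x"
  define q where "q l u j = (\<Sum>a<d l. \<Sum>b<d l. u a * \<phi> (A j (blk_start d l + a) (blk_start d l + b)) * u b)"
    for l u j
  have phi0: "\<phi> 0 = 0"
  proof -
    have "\<phi> (0 + 0) = \<phi> 0 + \<phi> 0" using hom unfolding field_emb_def by blast
    then show ?thesis by (metis add.right_neutral add_left_cancel)
  qed
  have Asym: "\<And>i a b. i \<le> n \<Longrightarrow> a < sum d {..<r} \<Longrightarrow> b < sum d {..<r} \<Longrightarrow> A i a b = A i b a"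
    using symbd unfolding sym_block_diag_tuple_def by blast
  have Az: "\<And>i a b. i \<le> n \<Longrightarrow> a < sum d {..<r} \<Longrightarrow> b < sum d {..<r} \<Longrightarrow>
      \<not> (\<exists>l<r. in_block d l a \<and> in_block d l b) \<Longrightarrow> A i a b = 0"
    using symbd unfolding sym_block_diag_tuple_def by blast
  have Psym: "pencil_at \<phi> n A x a b = pencil_at \<phi> n A x b a"
    if "a < sum d {..<r}" "b < sum d {..<r}" for a b
    unfolding pencil_at_def using Asym that by (intro sum.cong) auto
  have Pz: "\<forall>a<sum d {..<r}. \<forall>b<sum d {..<r}. \<not> (\<exists>l<r. in_block d l a \<and> in_block d l b) \<longrightarrow>
      pencil_at \<phi> n A x a b = 0"
  proof (intro allI impI)
    fix a b assume a: "a < sum d {..<r}" and b: "b < sum d {..<r}"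
      and nb: "\<not> (\<exists>l<r. in_block d l a \<and> in_block d l b)"
    show "pencil_at \<phi> n A x a b = 0"
      unfolding pencil_at_def using Az[OF _ a b nb] phi0 by (intro sum.neutral) auto
  qed
  have Ajz: "\<forall>a<sum d {..<r}. \<forall>b<sum d {..<r}. \<not> (\<exists>l<r. in_block d l a \<and> in_block d l b) \<longrightarrow>
      \<phi> (A j a b) = 0" if "j \<le> n" for j
  proof (intro allI impI)
    fix a b assume a: "a < sum d {..<r}" and b: "b < sum d {..<r}"
      and nb: "\<not> (\<exists>l<r. in_block d l a \<and> in_block d l b)"
    show "\<phi> (A j a b) = 0" using Az[OF that a b nb] phi0 by simp
  qed
  have gJ: "g l j = (\<Sum>a<d l. \<Sum>b<d l. \<phi> (A j (blk_start d l + a) (blk_start d l + b)) *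
       cofactor (mat (d l) (d l) (\<lambda>(a,b). pencil_at \<phi> n A x (blk_start d l + a) (blk_start d l + b))) a b)"
    for l j
    unfolding g_def block_det_deriv_def block_mat_def
    using jacobi[of "d l" "\<lambda>a b. pencil_at \<phi> n A x (blk_start d l + a) (blk_start d l + b)"
        "\<lambda>a b. \<phi> (A j (blk_start d l + a) (blk_start d l + b))"] by simp
  have onX: "on_X \<phi> n r d A x" and indep: "\<forall>c::nat \<Rightarrow> 'K. (\<forall>j\<le>n. (\<Sum>l<r. c l * g l j) = 0) \<longrightarrow> (\<forall>l<r. c l = 0)"
    using smooth unfolding smooth_pt_def g_def by blast+
  define Q where "Q l zz lm \<longleftrightarrow> lm \<noteq> 0 \<and> (\<forall>j. g l j = lm * q l zz j) \<and>
     (\<forall>a<d l. (\<Sum>b<d l. pencil_at \<phi> n A x (blk_start d l + a) (blk_start d l + b) * zz b) = 0) \<and>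
     (\<forall>v. (\<forall>a<d l. (\<Sum>b<d l. pencil_at \<phi> n A x (blk_start d l + a) (blk_start d l + b) * v b) = 0)
         \<longrightarrow> (\<exists>\<mu>. \<forall>b<d l. v b = \<mu> * zz b))" for l zz lm
  have blk: "\<exists>zz lm. Q l zz lm"
    if l: "l < r" for l
  proof -
    define M where "M = mat (d l) (d l) (\<lambda>(a,b). pencil_at \<phi> n A x (blk_start d l + a) (blk_start d l + b))"
    have M: "M \<in> carrier_mat (d l) (d l)" unfolding M_def by simp
    have Me: "M $$ (a,b) = pencil_at \<phi> n A x (blk_start d l + a) (blk_start d l + b)"
      if "a < d l" "b < d l" for a b
      unfolding M_def using that by simp
    have sym: "M $$ (a,b) = M $$ (b,a)" if "a < d l" "b < d l" for a b
      using Me that Psym block_in_range l by simp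
    have dM: "det M = 0"
      using onX l unfolding on_X_def block_det_at_def block_mat_def M_def by simp
    have "\<exists>j\<le>n. g l j \<noteq> 0"
    proof (rule ccontr)
      assume "\<not> (\<exists>j\<le>n. g l j \<noteq> 0)"
      moreover have "(\<Sum>l'<r. (if l' = l then 1 else 0) * g l' j) = g l j" for j
      proof -
        have "(\<Sum>l'<r. (if l' = l then 1 else 0) * g l' j) = (\<Sum>l'<r. if l' = l then g l j else 0)"
          by (rule sum.cong) auto
        also have "\<dots> = g l j" using l by simp
        finally show ?thesis .
      qed
      ultimately have H: "\<forall>j\<le>n. (\<Sum>l'<r. (if l' = l then 1 else 0) * g l' j) = 0" by simp
      have "\<forall>l'<r. (if l' = l then 1 else (0::'K)) = 0"
        using mp[OF spec[OF indep, of "\<lambda>l'. if l' = l then 1 else 0"] H] by simp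
      then show False using l by auto
    qed
    then obtain j where "g l j \<noteq> 0" by blast
    have nz: "\<exists>a<d l. \<exists>b<d l. cofactor M a b \<noteq> 0"
    proof (rule ccontr)
      assume "\<not> (\<exists>a<d l. \<exists>b<d l. cofactor M a b \<noteq> 0)"
      then have "\<forall>a<d l. \<forall>b<d l. cofactor M a b = 0" by auto
      then have "g l j = 0" unfolding gJ M_def[symmetric] by simp
      then show False using \<open>g l j \<noteq> 0\<close> by simp
    qed
    obtain zz lm where lm: "lm \<noteq> 0" and cof: "\<forall>a<d l. \<forall>b<d l. cofactor M a b = lm * zz a * zz b"
      and zk: "\<forall>a<d l. (\<Sum>b<d l. M $$ (a,b) * zz b) = 0"
      and kp: "\<forall>v. (\<forall>a<d l. (\<Sum>b<d l. M $$ (a,b) * v b) = 0) \<longrightarrow> (\<exists>\<mu>. \<forall>b<d l. v b = \<mu> * zz b)"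
      using block_struct[OF M sym dM nz] by blast
    have gq: "g l j = lm * q l zz j" for j
    proof -
      have "g l j = (\<Sum>a<d l. \<Sum>b<d l. \<phi> (A j (blk_start d l + a) (blk_start d l + b)) * (lm * zz a * zz b))"
        unfolding gJ M_def[symmetric] using cof by (intro sum.cong refl) auto
      also have "\<dots> = (\<Sum>a<d l. \<Sum>b<d l. lm * (zz a * \<phi> (A j (blk_start d l + a) (blk_start d l + b)) * zz b))"
        by (intro sum.cong refl) (simp add: ac_simps)
      also have "\<dots> = lm * q l zz j" unfolding q_def by (simp add: sum_distrib_left)
      finally show ?thesis .
    qed
    have zk': "\<forall>a<d l. (\<Sum>b<d l. pencil_at \<phi> n A x (blk_start d l + a) (blk_start d l + b) * zz b) = 0"
      using zk Me by simp
    have kp': "\<forall>v. (\<forall>a<d l. (\<Sum>b<d l. pencil_at \<phi> n A x (blk_start d l + a) (blk_start d l + b) * v b) = 0)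
         \<longrightarrow> (\<exists>\<mu>. \<forall>b<d l. v b = \<mu> * zz b)"
      using kp Me by simp
    have "Q l zz lm" unfolding Q_def
    proof (intro conjI)
      show "lm \<noteq> 0" by (rule lm)
      show "\<forall>j. g l j = lm * q l zz j" using gq by blast
      show "\<forall>a<d l. (\<Sum>b<d l. pencil_at \<phi> n A x (blk_start d l + a) (blk_start d l + b) * zz b) = 0" by (rule zk')
      show "\<forall>v. (\<forall>a<d l. (\<Sum>b<d l. pencil_at \<phi> n A x (blk_start d l + a) (blk_start d l + b) * v b) = 0)
         \<longrightarrow> (\<exists>\<mu>. \<forall>b<d l. v b = \<mu> * zz b)" by (rule kp')
    qed
    then show ?thesis by blast
  qed
  have "\<forall>l. \<exists>zz. \<exists>lm. l < r \<longrightarrow> Q l zz lm" using blk by blast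
  then obtain z where "\<forall>l. \<exists>lm. l < r \<longrightarrow> Q l (z l) lm" by (rule choice[THEN exE])
  then obtain lam where ZLa: "\<forall>l. l < r \<longrightarrow> Q l (z l) (lam l)" by (rule choice[THEN exE])
  have Ql: "Q l (z l) (lam l)" if "l < r" for l using ZLa that by blast
  have ZL1: "lam l \<noteq> 0" if "l < r" for l using Ql[OF that, unfolded Q_def] by (rule conjunct1)
  have ZL2: "g l j = lam l * q l (z l) j" if "l < r" for l j
    using conjunct1[OF conjunct2[OF Ql[OF that, unfolded Q_def]]] by (rule spec)
  have ZL3: "\<forall>a<d l. (\<Sum>b<d l. pencil_at \<phi> n A x (blk_start d l + a) (blk_start d l + b) * z l b) = 0"
    if "l < r" for l
    using conjunct1[OF conjunct2[OF conjunct2[OF Ql[OF that, unfolded Q_def]]]] .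
  have ZL4: "\<exists>\<mu>. \<forall>b<d l. v b = \<mu> * z l b"
    if "l < r" "\<forall>a<d l. (\<Sum>b<d l. pencil_at \<phi> n A x (blk_start d l + a) (blk_start d l + b) * v b) = 0" for l v
    using mp[OF spec[OF conjunct2[OF conjunct2[OF conjunct2[OF Ql[OF that(1), unfolded Q_def]]]]] that(2)] .
  have kerI: "in_kernel \<phi> n r d A x y \<longleftrightarrow> (\<forall>l<r. \<forall>a<d l. (\<Sum>b<d l. pencil_at \<phi> n A x (blk_start d l + a) (blk_start d l + b) * y (blk_start d l + b)) = 0)" for y
  proof
    assume K: "in_kernel \<phi> n r d A x y"
    show "\<forall>l<r. \<forall>a<d l. (\<Sum>b<d l. pencil_at \<phi> n A x (blk_start d l + a) (blk_start d l + b) * y (blk_start d l + b)) = 0"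
    proof (intro allI impI)
      fix l a assume l: "l < r" and a: "a < d l"
      have "(\<Sum>b<sum d {..<r}. pencil_at \<phi> n A x (blk_start d l + a) b * y b) = 0"
        using K block_in_range[of l r a d, OF l a] unfolding in_kernel_def by blast
      then show "(\<Sum>b<d l. pencil_at \<phi> n A x (blk_start d l + a) (blk_start d l + b) * y (blk_start d l + b)) = 0"
        using block_row_sum[OF Pz l a, of y] by simp
    qed
  next
    assume B: "\<forall>l<r. \<forall>a<d l. (\<Sum>b<d l. pencil_at \<phi> n A x (blk_start d l + a) (blk_start d l + b) * y (blk_start d l + b)) = 0"
    show "in_kernel \<phi> n r d A x y" unfolding in_kernel_def
    proof (intro allI impI)
      fix a' assume a': "a' < sum d {..<r}"
      obtain l where l: "l < r" and ib: "in_block d l a'" using block_exists[OF a'] by blast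
      define a where "a = a' - blk_start d l"
      have a: "a < d l" and a'eq: "a' = blk_start d l + a" using ib unfolding a_def in_block_def by auto
      show "(\<Sum>b<sum d {..<r}. pencil_at \<phi> n A x a' b * y b) = 0"
        unfolding a'eq using block_row_sum[OF Pz l a, of y] B l a by simp
    qed
  qed
  have psiD: "psi \<phi> r d A y j = (\<Sum>l<r. q l (\<lambda>a. y (blk_start d l + a)) j)" if j: "j \<le> n" for y j
    unfolding psi_def q_def using block_quad_sum[OF Ajz[OF j], of y] by simp
  have qscale: "q l v j = \<mu>^2 * q l u j" if "\<forall>b<d l. v b = \<mu> * u b" for l v u \<mu> j
  proof -
    have "q l v j = (\<Sum>a<d l. \<Sum>b<d l. \<mu>^2 * (u a * \<phi> (A j (blk_start d l + a) (blk_start d l + b)) * u b))"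
      unfolding q_def using that by (intro sum.cong refl) (simp add: power2_eq_square ac_simps)
    then show ?thesis unfolding q_def by (simp add: sum_distrib_left)
  qed
  have sqrt: "\<exists>\<sigma>. \<sigma> * \<sigma> = t" for t :: 'K
  proof -
    have "degree [:-t, 0, 1:] > 0" by simp
    then obtain \<sigma> where "poly [:-t, 0, 1:] \<sigma> = 0" using algcl unfolding alg_closed_def by blast
    then show ?thesis by (auto simp: algebra_simps)
  qed
  have E: "(in_psi_image \<phi> n r d A x h \<or> (\<forall>i\<le>n. h i = 0)) \<longleftrightarrow> (\<exists>c. \<forall>i\<le>n. h i = (\<Sum>l<r. c l * g l i))" for h
  proof
    assume "in_psi_image \<phi> n r d A x h \<or> (\<forall>i\<le>n. h i = 0)"
    then show "\<exists>c. \<forall>i\<le>n. h i = (\<Sum>l<r. c l * g l i)"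
    proof
      assume "in_psi_image \<phi> n r d A x h"
      then obtain y c0 where yk: "in_kernel \<phi> n r d A x y" and c0: "c0 \<noteq> 0"
        and ps: "\<forall>i\<le>n. psi \<phi> r d A y i = c0 * h i"
        unfolding in_psi_image_def by blast
      have "\<forall>l\<in>{..<r}. \<exists>\<mu>. \<forall>b<d l. y (blk_start d l + b) = \<mu> * z l b"
      proof
        fix l assume "l \<in> {..<r}"
        then have l: "l < r" by simp
        have "\<forall>a<d l. (\<Sum>b<d l. pencil_at \<phi> n A x (blk_start d l + a) (blk_start d l + b) * y (blk_start d l + b)) = 0"
          using yk l unfolding kerI by blast
        then show "\<exists>\<mu>. \<forall>b<d l. y (blk_start d l + b) = \<mu> * z l b"
          by (rule ZL4[OF l])
      qed
      then obtain mu where mu0: "\<forall>l\<in>{..<r}. \<forall>b<d l. y (blk_start d l + b) = mu l * z l b"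
        by (rule bchoice[THEN exE])
      then have mu: "\<forall>l<r. \<forall>b<d l. y (blk_start d l + b) = mu l * z l b" by simp
      have "\<forall>i\<le>n. h i = (\<Sum>l<r. (mu l ^ 2 / (lam l * c0)) * g l i)"
      proof (intro allI impI)
        fix i assume i: "i \<le> n"
        have "c0 * h i = psi \<phi> r d A y i" using ps i by simp
        also have "\<dots> = (\<Sum>l<r. q l (\<lambda>a. y (blk_start d l + a)) i)" by (rule psiD[OF i])
        also have "\<dots> = (\<Sum>l<r. mu l ^ 2 * q l (z l) i)"
        proof (rule sum.cong[OF refl])
          fix l assume "l \<in> {..<r}"
          then show "q l (\<lambda>a. y (blk_start d l + a)) i = mu l ^ 2 * q l (z l) i"
            using qscale[where l=l and v="\<lambda>a. y (blk_start d l + a)" and \<mu>="mu l" and u="z l" and j=i] mu by simp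
        qed
        also have "\<dots> = (\<Sum>l<r. c0 * ((mu l ^ 2 / (lam l * c0)) * g l i))"
        proof (rule sum.cong[OF refl])
          fix l assume "l \<in> {..<r}"
          then have "lam l \<noteq> 0" "g l i = lam l * q l (z l) i" using ZL1 ZL2 by auto
          then show "mu l ^ 2 * q l (z l) i = c0 * ((mu l ^ 2 / (lam l * c0)) * g l i)"
            using c0 by (simp add: field_simps)
        qed
        also have "\<dots> = c0 * (\<Sum>l<r. (mu l ^ 2 / (lam l * c0)) * g l i)" by (simp add: sum_distrib_left)
        finally show "h i = (\<Sum>l<r. (mu l ^ 2 / (lam l * c0)) * g l i)" using c0 by simp
      qed
      then show ?thesis by (rule exI[where x="\<lambda>l. mu l ^ 2 / (lam l * c0)"])
    next
      assume "\<forall>i\<le>n. h i = 0"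
      then have "\<forall>i\<le>n. h i = (\<Sum>l<r. 0 * g l i)" by simp
      then show ?thesis by (rule exI[where x="\<lambda>l. 0"])
    qed
  next
    assume "\<exists>c. \<forall>i\<le>n. h i = (\<Sum>l<r. c l * g l i)"
    then obtain c where c: "\<forall>i\<le>n. h i = (\<Sum>l<r. c l * g l i)" by blast
    show "in_psi_image \<phi> n r d A x h \<or> (\<forall>i\<le>n. h i = 0)"
    proof (cases "\<forall>i\<le>n. h i = 0")
      case True then show ?thesis by simp
    next
      case False
      have "\<forall>l. \<exists>s. s * s = c l * lam l" using sqrt by blast
      then obtain \<sigma> where \<sigma>: "\<forall>l. \<sigma> l * \<sigma> l = c l * lam l" by (rule choice[THEN exE])
      define y where "y b = (\<Sum>l<r. if in_block d l b then \<sigma> l * z l (b - blk_start d l) else 0)" for b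
      have yb: "y (blk_start d l + a) = \<sigma> l * z l a" if l: "l < r" and a: "a < d l" for l a
      proof -
        have "y (blk_start d l + a) = (\<Sum>l'<r. if l' = l then \<sigma> l * z l a else 0)"
          unfolding y_def
        proof (rule sum.cong[OF refl])
          fix l' assume "l' \<in> {..<r}"
          show "(if in_block d l' (blk_start d l + a) then \<sigma> l' * z l' (blk_start d l + a - blk_start d l') else 0)
             = (if l' = l then \<sigma> l * z l a else 0)"
            using in_block_unique[of d l' "blk_start d l + a" l] in_block_add[of a d l] a by auto
        qed
        also have "\<dots> = \<sigma> l * z l a" using l by simp
        finally show ?thesis .
      qed
      have yk: "in_kernel \<phi> n r d A x y"
        unfolding kerI
      proof (intro allI impI)
        fix l a assume l: "l < r" and a: "a < d l"
        have "(\<Sum>b<d l. pencil_at \<phi> n A x (blk_start d l + a) (blk_start d l + b) * y (blk_start d l + b))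
            = (\<Sum>b<d l. \<sigma> l * (pencil_at \<phi> n A x (blk_start d l + a) (blk_start d l + b) * z l b))"
          using yb l by (intro sum.cong refl) (simp add: ac_simps)
        also have "\<dots> = \<sigma> l * (\<Sum>b<d l. pencil_at \<phi> n A x (blk_start d l + a) (blk_start d l + b) * z l b)"
          by (simp add: sum_distrib_left)
        also have "\<dots> = 0" using ZL3[OF l] a by simp
        finally show "(\<Sum>b<d l. pencil_at \<phi> n A x (blk_start d l + a) (blk_start d l + b) * y (blk_start d l + b)) = 0" .
      qed
      have "\<forall>i\<le>n. psi \<phi> r d A y i = 1 * h i"
      proof (intro allI impI)
        fix i assume i: "i \<le> n"
        have "psi \<phi> r d A y i = (\<Sum>l<r. q l (\<lambda>a. y (blk_start d l + a)) i)" by (rule psiD[OF i])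
        also have "\<dots> = (\<Sum>l<r. (\<sigma> l)^2 * q l (z l) i)"
        proof (rule sum.cong[OF refl])
          fix l assume "l \<in> {..<r}"
          then show "q l (\<lambda>a. y (blk_start d l + a)) i = (\<sigma> l)^2 * q l (z l) i"
            using qscale[where l=l and v="\<lambda>a. y (blk_start d l + a)" and \<mu>="\<sigma> l" and u="z l" and j=i] yb by simp
        qed
        also have "\<dots> = (\<Sum>l<r. c l * g l i)"
        proof (rule sum.cong[OF refl])
          fix l assume "l \<in> {..<r}"
          then have "g l i = lam l * q l (z l) i" using ZL2 by auto
          then show "(\<sigma> l)^2 * q l (z l) i = c l * g l i" using \<sigma> by (simp add: power2_eq_square ac_simps)
        qed
        also have "\<dots> = h i" using c i by simp
        finally show "psi \<phi> r d A y i = 1 * h i" by simp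
      qed
      then have "in_psi_image \<phi> n r d A x h" unfolding in_psi_image_def using yk
        by (intro exI[of _ y] exI[of _ 1]) auto
      then show ?thesis by simp
    qed
  qed
  have TC: "tangent_cone \<phi> n r d A x = {z. \<forall>l<r. (\<Sum>j\<le>n. g l j * z j) = 0}"
    unfolding tangent_cone_def g_def by simp
  have part1: "\<forall>h. (\<exists>i\<le>n. h i \<noteq> 0) \<longrightarrow>
            (in_psi_image \<phi> n r d A x h \<longleftrightarrow>
             (\<forall>z\<in>tangent_cone \<phi> n r d A x. (\<Sum>i\<le>n. h i * z i) = 0))"
  proof (intro allI impI)
    fix h :: "nat \<Rightarrow> 'K" assume hnz: "\<exists>i\<le>n. h i \<noteq> 0"
    show "in_psi_image \<phi> n r d A x h \<longleftrightarrow> (\<forall>z\<in>tangent_cone \<phi> n r d A x. (\<Sum>i\<le>n. h i * z i) = 0)"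
    proof
      assume "in_psi_image \<phi> n r d A x h"
      then obtain c where c: "\<forall>i\<le>n. h i = (\<Sum>l<r. c l * g l i)" using E by blast
      show "\<forall>z\<in>tangent_cone \<phi> n r d A x. (\<Sum>i\<le>n. h i * z i) = 0"
      proof
        fix z assume "z \<in> tangent_cone \<phi> n r d A x"
        then have zt: "\<forall>l<r. (\<Sum>j\<le>n. g l j * z j) = 0" unfolding TC by simp
        have "(\<Sum>i\<le>n. h i * z i) = (\<Sum>i\<le>n. \<Sum>l<r. c l * (g l i * z i))"
          using c by (intro sum.cong refl) (simp add: sum_distrib_right mult.assoc)
        also have "\<dots> = (\<Sum>l<r. \<Sum>i\<le>n. c l * (g l i * z i))" by (rule sum.swap)
        also have "\<dots> = (\<Sum>l<r. c l * (\<Sum>i\<le>n. g l i * z i))" by (simp add: sum_distrib_left)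
        also have "\<dots> = 0" using zt by simp
        finally show "(\<Sum>i\<le>n. h i * z i) = 0" .
      qed
    next
      assume H: "\<forall>z\<in>tangent_cone \<phi> n r d A x. (\<Sum>i\<le>n. h i * z i) = 0"
      have "\<exists>c. \<forall>i\<le>n. h i = (\<Sum>l<r. c l * g l i)" using H unfolding TC by (intro dual_span) auto
      then show "in_psi_image \<phi> n r d A x h" using E hnz by blast
    qed
  qed
  show ?thesis using part1 indep E by blast
qed

end
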